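(* Let $m\ge1$, let $R_-,R_+\subset\mathbb Z$ be disjoint arithmetic progressions with common difference $m$ with $|R_-|+|R_+|=d$ and $\min(R_-\cup R_+)=0$, and let $T_{long}=T_{I,R}$ be the associated long-diagonal pentagram map in $\mathbb{RP}^d$. Define $$J_\pm=\{\max R_\pm,\ \max R_\pm+m,\ \dots,\ \min R_\pm+m(d-1)\}=\bigcap_{r\in R_\pm}\{r,r+m,\dots,r+m(d-1)\}.$$ Then $|J_-|+|J_+|=d+2$, and for a generic twisted $n$-gon $\{v_k\}$ in $\mathbb{RP}^d$ one has, for every $k$, $$\bigcap_{r\in R_\pm}P_{k+r}=\mathrm{span}\{v_{k+j}:j\in J_\pm\},\qquad \hat v_k=\mathrm{span}\{v_{k+j}:j\in J_-\}\cap\mathrm{span}\{v_{k+j}:j\in J_+\}.$$ Moreover $J_-$ and $J_+$ are disjoint, except in the case $R_-=\{0,m,\dots,km\}$, $R_+=\{(k+1)m,\dots,(d-1)m\}$ (or the same with $R_-$ and $R_+$ swapped), in which $T_{I,R}$ is the identity map up to a shift of indices.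
   Context: For $(d-1)$-tuples of positive integers $I=(i_1,\dots,i_{d-1})$ and $R=(r_1,\dots,r_{d-1})$ and a twisted $n$-gon $\{v_k\}$ in $\mathbb{RP}^d$ (a sequence with $v_{k+n}=M(v_k)$ for a fixed projective transformation $M$), define the diagonal hyperplanes $P_k=\mathrm{span}\langle v_k,v_{k+i_1},\dots,v_{k+i_1+\dots+i_{d-1}}\rangle$ and the map $T_{I,R}$ by $\hat v_k=P_k\cap P_{k+r_1}\cap\dots\cap P_{k+r_1+\dots+r_{d-1}}$. A long-diagonal pentagram map is $T_{I,R}$ where $I=(m,\dots,m)$ and $R$ is the sequence of differences between consecutive elements of $R_-\cup R_+$ (in increasing order), for two disjoint arithmetic progressions $R_-,R_+$ with common difference $m$ and $d$ elements in total. *)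

theory Defs
  imports "HOL-Analysis.Analysis"
begin

text \<open>Points of RP^d are represented by nonzero vectors of real^'n with CARD('n) = d+1;
  projective subspaces by linear subspaces (spans).  Polygons are indexed by integers.\<close>

definition twisted_ngon :: "nat \<Rightarrow> (int \<Rightarrow> real^'n) \<Rightarrow> bool" where
  "twisted_ngon n V \<longleftrightarrow> n > 0 \<and> (\<forall>k. V k \<noteq> 0) \<and>
     (\<exists>M::real^'n^'n. invertible M \<and> (\<forall>k. \<exists>c. c \<noteq> 0 \<and> V (k + int n) = c *\<^sub>R (M *v V k)))"

definition psums :: "int list \<Rightarrow> int list" where
  "psums xs = map (\<lambda>j. sum_list (take j xs)) [0..<length xs + 1]"

definition diag_plane :: "(int \<Rightarrow> real^'n) \<Rightarrow> int list \<Rightarrow> int \<Rightarrow> (real^'n) set" where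
  "diag_plane V I k = span (V ` ((\<lambda>j. k + j) ` set (psums I)))"

definition TIR_point :: "(int \<Rightarrow> real^'n) \<Rightarrow> int list \<Rightarrow> int list \<Rightarrow> int \<Rightarrow> (real^'n) set" where
  "TIR_point V I R k = (\<Inter>r\<in>set (psums R). diag_plane V I (k + r))"

definition diffs :: "int list \<Rightarrow> int list" where
  "diffs xs = map2 (\<lambda>a b. b - a) xs (tl xs)"

definition long_I :: "int \<Rightarrow> nat \<Rightarrow> int list" where
  "long_I m d = replicate (d - 1) m"

definition long_R :: "int set \<Rightarrow> int set \<Rightarrow> int list" where
  "long_R Rm Rp = diffs (sorted_list_of_set (Rm \<union> Rp))"

definition arith_prog :: "int \<Rightarrow> int set \<Rightarrow> bool" where
  "arith_prog m A \<longleftrightarrow> (\<exists>a s. s \<ge> 1 \<and> A = {a + m * int i | i. i < s})"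

definition J_set :: "int \<Rightarrow> nat \<Rightarrow> int set \<Rightarrow> int set" where
  "J_set m d R = {Max R + m * int i | i. Max R + m * int i \<le> Min R + m * int (d - 1)}"

text \<open>Genericity (general position): for every k, any at most d+1 vertices with distinct indices
  in the window k..k+L are linearly independent (and distinct).\<close>
definition gen_pos :: "nat \<Rightarrow> int \<Rightarrow> (int \<Rightarrow> real^'n) \<Rightarrow> bool" where
  "gen_pos d L V \<longleftrightarrow> (\<forall>k S. S \<subseteq> {k..k + L} \<and> card S \<le> d + 1 \<longrightarrow>
       inj_on V S \<and> independent (V ` S))"

end

theory Submission imports Defs begin

lemma span_Int_indep:
  fixes A B :: "'a::real_vector set"
  assumes ind: "independent (A \<union> B)"
  shows "span A \<inter> span B = span (A \<inter> B)"
proof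
  show "span (A \<inter> B) \<subseteq> span A \<inter> span B" by (simp add: span_mono)
next
  show "span A \<inter> span B \<subseteq> span (A \<inter> B)"
  proof
    fix x assume x: "x \<in> span A \<inter> span B"
    let ?C = "A \<union> B"
    let ?r = "representation ?C x"
    have xC: "x \<in> span ?C" using x span_mono[of A ?C] by auto
    have rA: "?r = representation A x"
      by (rule real_vector.representation_extend[OF ind]) (use x in auto)
    have rB: "?r = representation B x"
      by (rule real_vector.representation_extend[OF ind]) (use x in auto)
    have sub: "{b. ?r b \<noteq> 0} \<subseteq> A \<inter> B"
      using real_vector.representation_ne_zero[of A x] real_vector.representation_ne_zero[of B x] rA rB
      by auto
    have "x = (\<Sum>b | ?r b \<noteq> 0. ?r b *\<^sub>R b)"
      using real_vector.sum_nonzero_representation_eq[OF ind xC] by simp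
    also have "\<dots> \<in> span (A \<inter> B)"
      by (rule span_sum) (use sub in \<open>auto intro: span_scale span_base\<close>)
    finally show "x \<in> span (A \<inter> B)" .
  qed
qed

lemma gen_span_Int:
  fixes V :: "int \<Rightarrow> real^'n"
  assumes g: "gen_pos d L V" and sub: "A \<union> B \<subseteq> {k..k+L}" and c: "card (A \<union> B) \<le> d + 1"
  shows "span (V ` A) \<inter> span (V ` B) = span (V ` (A \<inter> B))"
proof -
  have h: "inj_on V (A \<union> B) \<and> independent (V ` (A \<union> B))"
    using g sub c unfolding gen_pos_def by blast
  have "V ` (A \<inter> B) = V ` A \<inter> V ` B"
    using h by (intro inj_on_image_Int[of V "A \<union> B"]) auto
  moreover have "independent (V ` A \<union> V ` B)" using h by (simp add: image_Un)
  ultimately show ?thesis using span_Int_indep by metis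
qed

lemma planes_Int:
  fixes V :: "int \<Rightarrow> real^'n" and G :: "nat \<Rightarrow> int"
  assumes injG: "inj G" and g: "gen_pos d L V"
    and win: "\<And>i. i < s + d - 1 \<Longrightarrow> G i \<in> {k..k+L}"
  shows "t < s \<Longrightarrow> (\<Inter>u\<in>{..<Suc t}. span (V ` G ` {u..<u+d})) = span (V ` G ` {t..<d})"
proof (induction t)
  case 0
  have "{..<Suc 0} = {0::nat}" by auto
  then show ?case by simp
next
  case (Suc t)
  have IH: "(\<Inter>u\<in>{..<Suc t}. span (V ` G ` {u..<u+d})) = span (V ` G ` {t..<d})"
    using Suc by simp
  have "(\<Inter>u\<in>{..<Suc (Suc t)}. span (V ` G ` {u..<u+d}))
       = (\<Inter>u\<in>{..<Suc t}. span (V ` G ` {u..<u+d})) \<inter> span (V ` G ` {Suc t..<Suc t+d})"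
    by (simp add: lessThan_Suc Int_commute)
  also have "\<dots> = span (V ` G ` {t..<d}) \<inter> span (V ` G ` {Suc t..<Suc t+d})" using IH by simp
  also have "\<dots> = span (V ` (G ` {t..<d} \<inter> G ` {Suc t..<Suc t+d}))"
  proof (rule gen_span_Int[OF g])
    have "G ` {t..<d} \<union> G ` {Suc t..<Suc t+d} \<subseteq> G ` {t..<Suc t+d}" by auto
    moreover have "G ` {t..<Suc t+d} \<subseteq> {k..k+L}"
      using win Suc.prems by auto
    ultimately show "G ` {t..<d} \<union> G ` {Suc t..<Suc t+d} \<subseteq> {k..k+L}" by blast
    have "card (G ` {t..<d} \<union> G ` {Suc t..<Suc t+d}) \<le> card (G ` {t..<Suc t+d})"
      by (rule card_mono) auto
    also have "\<dots> \<le> card {t..<Suc t+d}" by (rule card_image_le) auto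
    finally show "card (G ` {t..<d} \<union> G ` {Suc t..<Suc t+d}) \<le> d + 1" by simp
  qed
  also have "G ` {t..<d} \<inter> G ` {Suc t..<Suc t+d} = G ` {Suc t..<d}"
    using image_Int[OF injG, of "{t..<d}" "{Suc t..<Suc t+d}"] by auto
  finally show ?case by simp
qed

lemma psums_Nil: "psums [] = [0]" by (simp add: psums_def)

lemma psums_Cons: "psums (c # cs) = 0 # map ((+) c) (psums cs)"
proof -
  have "[0..<length (c#cs) + 1] = 0 # map Suc [0..<length cs + 1]"
    by (simp add: upt_conv_Cons map_Suc_upt del: upt_Suc)
  then show ?thesis by (simp add: psums_def del: upt_Suc)
qed

lemma diffs_Cons2: "diffs (x # y # ys) = (y - x) # diffs (y # ys)"
  by (simp add: diffs_def)

lemma psums_diffs: "psums (diffs (x # ys)) = map (\<lambda>z. z - x) (x # ys)"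
proof (induction ys arbitrary: x)
  case Nil
  then show ?case by (simp add: diffs_def psums_def)
next
  case (Cons y ys)
  show ?case by (simp add: diffs_Cons2 psums_Cons Cons)
qed

lemma psums_replicate: "set (psums (replicate n (m::int))) = (\<lambda>j. m * int j) ` {..n}"
proof -
  have "set (psums (replicate n m)) = (\<lambda>j. sum_list (take j (replicate n m))) ` {0..<n+1}"
    by (simp add: psums_def del: upt_Suc)
  also have "\<dots> = (\<lambda>j. m * int j) ` {..n}"
  proof (rule image_cong)
    show "{0..<n+1} = {..n}" by auto
    fix j assume "j \<in> {..n}"
    then show "sum_list (take j (replicate n m)) = m * int j"
      by (simp add: take_replicate min_def sum_list_replicate)
  qed
  finally show ?thesis .
qed


lemma prog_eq: "{a + m * int i | i. i < s} = (\<lambda>i. a + m * int i) ` {..<s}"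
  by auto

lemma inj_prog: "(m::int) \<ge> 1 \<Longrightarrow> inj (\<lambda>i. a + m * int i)"
  by (auto simp: inj_def)

lemma Max_prog:
  assumes "(m::int) \<ge> 1" "s \<ge> 1"
  shows "Max ((\<lambda>i. a + m * int i) ` {..<s}) = a + m * int (s - 1)"
proof (rule Max_eqI)
  show "finite ((\<lambda>i. a + m * int i) ` {..<s})" by simp
  show "a + m * int (s - 1) \<in> (\<lambda>i. a + m * int i) ` {..<s}" using assms by (intro image_eqI[where x="s-1"]) auto
  fix y assume "y \<in> (\<lambda>i. a + m * int i) ` {..<s}"
  then obtain i where "i < s" "y = a + m * int i" by auto
  moreover have "m * int i \<le> m * int (s - 1)"
    using assms \<open>i < s\<close> by (intro mult_left_mono) auto
  ultimately show "y \<le> a + m * int (s - 1)" by simp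
qed

lemma Min_prog:
  assumes "(m::int) \<ge> 1" "s \<ge> 1"
  shows "Min ((\<lambda>i. a + m * int i) ` {..<s}) = a"
proof (rule Min_eqI)
  show "finite ((\<lambda>i. a + m * int i) ` {..<s})" by simp
  show "a \<in> (\<lambda>i. a + m * int i) ` {..<s}" using assms by (auto intro!: image_eqI[where x=0])
  fix y assume "y \<in> (\<lambda>i. a + m * int i) ` {..<s}"
  then show "a \<le> y" using assms by auto
qed

lemma J_prog:
  assumes m: "(m::int) \<ge> 1" and s: "1 \<le> s" "s \<le> d"
  shows "J_set m d ((\<lambda>i. a + m * int i) ` {..<s}) = (\<lambda>i. a + m * int i) ` {s-1..d-1}"
proof -
  have "J_set m d ((\<lambda>i. a + m * int i) ` {..<s}) =
        {a + m * int (s - 1) + m * int i | i. a + m * int (s - 1) + m * int i \<le> a + m * int (d - 1)}"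
    unfolding J_set_def using Max_prog[OF m s(1)] Min_prog[OF m s(1)] by simp
  also have "\<dots> = (\<lambda>i. a + m * int i) ` {s-1..d-1}"
  proof safe
    fix i assume h: "a + m * int (s - 1) + m * int i \<le> a + m * int (d - 1)"
    have "m * (int (s - 1) + int i) \<le> m * int (d - 1)" using h by (simp add: algebra_simps)
    then have "int (s - 1) + int i \<le> int (d - 1)" using m by simp
    then have "s - 1 + i \<in> {s-1..d-1}" by auto
    moreover have "a + m * int (s - 1) + m * int i = a + m * int (s - 1 + i)" by (simp add: algebra_simps)
    ultimately show "a + m * int (s - 1) + m * int i \<in> (\<lambda>i. a + m * int i) ` {s-1..d-1}" by blast
  next
    fix j assume j: "j \<in> {s-1..d-1}"
    define i where "i = j - (s - 1)"
    have ji: "j = s - 1 + i" using j i_def by auto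
    have "m * int j \<le> m * int (d - 1)" using j m by (intro mult_left_mono) auto
    then show "\<exists>i. a + m * int j = a + m * int (s - 1) + m * int i \<and>
                a + m * int (s - 1) + m * int i \<le> a + m * int (d - 1)"
      by (intro exI[of _ i]) (simp add: ji algebra_simps)
  qed
  finally show ?thesis .
qed

lemma Int_prog:
  assumes m: "(m::int) \<ge> 1" and s: "1 \<le> s" "s \<le> d"
  shows "(\<Inter>r\<in>(\<lambda>i. a + m * int i) ` {..<s}. {r + m * int i | i. i < d}) = (\<lambda>i. a + m * int i) ` {s-1..d-1}"
proof safe
  fix x assume x0: "x \<in> (\<Inter>r\<in>(\<lambda>i. a + m * int i) ` {..<s}. {r + m * int i | i. i < d})"
  then have x: "\<forall>r\<in>(\<lambda>i. a + m * int i) ` {..<s}. x \<in> {r + m * int i | i. i < d}" by blast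
  have "a + m * int (s - 1) \<in> (\<lambda>i. a + m * int i) ` {..<s}" using s by (intro image_eqI[where x="s-1"]) auto
  with x obtain i where i: "i < d" "x = a + m * int (s - 1) + m * int i" by blast
  have "a \<in> (\<lambda>i. a + m * int i) ` {..<s}" using s by (auto intro!: image_eqI[where x=0])
  with x obtain i' where i': "i' < d" "x = a + m * int i'" by force
  have "m * int i' = m * (int (s - 1) + int i)" using i i' by (simp add: algebra_simps)
  then have "int i' = int (s - 1) + int i" using m by simp
  then have "i' = s - 1 + i" by simp
  then show "x \<in> (\<lambda>i. a + m * int i) ` {s-1..d-1}" using i' by (auto intro!: image_eqI[where x=i'])
next
  fix x r j t assume j: "j \<in> {s-1..d-1}" and t: "t < s"
  have jt: "t \<le> j" using j t by auto
  have "int j = int t + int (j - t)" using jt by simp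
  then have "a + m * int j = (a + m * int t) + m * int (j - t)" by (metis distrib_left add.assoc)
  moreover have "j - t < d" using j t s by auto
  ultimately show "\<exists>ib. a + m * int j = a + m * int t + m * int ib \<and> ib < d" by blast
qed

lemma card_J_prog:
  assumes m: "(m::int) \<ge> 1" and s: "1 \<le> s" "s \<le> d"
  shows "card ((\<lambda>i. a + m * int i) ` {s-1..d-1}) = d - s + 1"
proof -
  have "card ((\<lambda>i. a + m * int i) ` {s-1..d-1}) = card {s-1..d-1}"
    using inj_prog[OF m] by (intro card_image) (auto simp: inj_on_def)
  then show ?thesis using s by simp
qed

lemma card_prog:
  assumes m: "(m::int) \<ge> 1"
  shows "card ((\<lambda>i. a + m * int i) ` {..<s}) = s"
  using inj_prog[OF m] by (subst card_image) (auto simp: inj_on_def)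


lemma plane_eq:
  assumes "d \<ge> 1"
  shows "diag_plane V (long_I m d) c = span (V ` ((\<lambda>i. c + m * int i) ` {..<d}))"
proof -
  have "{..d-1} = {..<d}" using assms by auto
  then show ?thesis
    unfolding diag_plane_def long_I_def psums_replicate by (simp add: image_image)
qed

lemma geo_R:
  fixes V :: "int \<Rightarrow> real^'n"
  assumes m: "(m::int) \<ge> 1" and s: "1 \<le> s" "s \<le> d" and g: "gen_pos d L V"
    and a0: "0 \<le> a" and aL: "a + m * int (s - 1) + m * int (d - 1) \<le> L"
  shows "(\<Inter>r\<in>(\<lambda>i. a + m * int i) ` {..<s}. diag_plane V (long_I m d) (k + r))
       = span (V ` ((\<lambda>j. k + j) ` (\<lambda>i. a + m * int i) ` {s-1..d-1}))"
proof -
  define G where "G = (\<lambda>i::nat. k + a + m * int i)"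
  have injG: "inj G" using m by (auto simp: inj_def G_def)
  have win: "G i \<in> {k..k+L}" if "i < s + d - 1" for i
  proof -
    have "int i \<le> int (s - 1) + int (d - 1)" using that by auto
    then have "m * int i \<le> m * (int (s - 1) + int (d - 1))" using m by (intro mult_left_mono) auto
    moreover have "0 \<le> m * int i" using m by simp
    ultimately show ?thesis using aL a0 by (simp add: G_def algebra_simps)
  qed
  have pl: "diag_plane V (long_I m d) (k + (a + m * int u)) = span (V ` G ` {u..<u+d})" for u
  proof -
    have "(\<lambda>i. k + (a + m * int u) + m * int i) ` {..<d} = G ` {u..<u+d}"
    proof safe
      fix i assume "i < d"
      then show "k + (a + m * int u) + m * int i \<in> G ` {u..<u+d}"
        by (intro image_eqI[where x="u+i"]) (auto simp: G_def algebra_simps)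
    next
      fix x assume "x \<in> {u..<u+d}"
      then show "G x \<in> (\<lambda>i. k + (a + m * int u) + m * int i) ` {..<d}"
        by (intro image_eqI[where x="x-u"]) (auto simp: G_def algebra_simps of_nat_diff)
    qed
    then show ?thesis using plane_eq[of d V m] s by simp
  qed
  have "(\<Inter>r\<in>(\<lambda>i. a + m * int i) ` {..<s}. diag_plane V (long_I m d) (k + r))
       = (\<Inter>u\<in>{..<Suc (s-1)}. span (V ` G ` {u..<u+d}))"
    using s by (simp add: pl)
  also have "\<dots> = span (V ` G ` {s-1..<d})"
    by (rule planes_Int[OF injG g win]) (use s in auto)
  also have "G ` {s-1..<d} = (\<lambda>j. k + j) ` (\<lambda>i. a + m * int i) ` {s-1..d-1}"
  proof -
    have "{s-1..<d} = {s-1..d-1}" using s by auto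
    then show ?thesis by (simp add: G_def image_image add.assoc)
  qed
  finally show ?thesis .
qed


lemma exc_Rm: "{m * int i | i. i \<le> j} = (\<lambda>i. 0 + m * int i) ` {..<Suc j}"
  by auto

lemma exc_Rp:
  assumes "j < d - 1"
  shows "{m * int i | i. j < i \<and> i \<le> d - 1} = (\<lambda>i. m * int (Suc j) + m * int i) ` {..<d-1-j}"
proof (intro equalityI subsetI)
  fix x assume "x \<in> {m * int i | i. j < i \<and> i \<le> d - 1}"
  then obtain i where i: "j < i" "i \<le> d - 1" "x = m * int i" by auto
  have "int i = int (Suc j) + int (i - Suc j)" using i by simp
  then have "m * int i = m * int (Suc j) + m * int (i - Suc j)" by (metis distrib_left)
  moreover have "i - Suc j < d - 1 - j" using i by auto
  ultimately show "x \<in> (\<lambda>i. m * int (Suc j) + m * int i) ` {..<d-1-j}" using i(3) by blast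
next
  fix x assume "x \<in> (\<lambda>i. m * int (Suc j) + m * int i) ` {..<d-1-j}"
  then obtain i where i: "i < d-1-j" "x = m * int (Suc j) + m * int i" by auto
  have "x = m * int (Suc j + i)" using i by (simp add: algebra_simps)
  moreover have "j < Suc j + i" "Suc j + i \<le> d - 1" using i by auto
  ultimately show "x \<in> {m * int i | i. j < i \<and> i \<le> d - 1}" by blast
qed

lemma exc_props:
  assumes m: "(m::int) \<ge> 1" and j: "j < d - 1"
    and Rm: "Rm = {m * int i | i. i \<le> j}" and Rp: "Rp = {m * int i | i. j < i \<and> i \<le> d - 1}"
  shows "J_set m d Rm \<inter> J_set m d Rp = {m * int (d - 1)}
       \<and> card (J_set m d Rm \<union> J_set m d Rp) = d + 1
       \<and> (\<forall>x\<in>J_set m d Rm \<union> J_set m d Rp. 0 \<le> x \<and> x \<le> Max (Rm \<union> Rp) + m * int (d - 1))"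
proof -
  define b where "b = m * int (Suc j)"
  have Rm': "Rm = (\<lambda>i. 0 + m * int i) ` {..<Suc j}" using Rm exc_Rm by simp
  have Rp': "Rp = (\<lambda>i. b + m * int i) ` {..<d-1-j}" using Rp exc_Rp[OF j] b_def by simp
  have Jm: "J_set m d Rm = (\<lambda>i. 0 + m * int i) ` {Suc j - 1..d-1}"
    unfolding Rm' by (rule J_prog[OF m]) (use j in auto)
  have Jp: "J_set m d Rp = (\<lambda>i. b + m * int i) ` {d-1-j - 1..d-1}"
    unfolding Rp' by (rule J_prog[OF m]) (use j in auto)
  have cm: "card (J_set m d Rm) = d - Suc j + 1"
    unfolding Jm by (rule card_J_prog[OF m]) (use j in auto)
  have cp: "card (J_set m d Rp) = d - (d-1-j) + 1"
    unfolding Jp by (rule card_J_prog[OF m]) (use j in auto)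
  have int: "J_set m d Rm \<inter> J_set m d Rp = {m * int (d - 1)}"
  proof safe
    fix x assume x1: "x \<in> J_set m d Rm" and x2: "x \<in> J_set m d Rp"
    from x1 obtain i where i: "j \<le> i" "i \<le> d - 1" "x = m * int i" unfolding Jm by auto
    from x2 obtain i' where i': "d - 1 - j - 1 \<le> i'" "i' \<le> d - 1" "x = b + m * int i'" unfolding Jp by auto
    have "m * int i = m * (int (Suc j) + int i')" using i i' b_def by (simp add: algebra_simps)
    then have "int i = int (Suc j) + int i'" using m by simp
    then have "i = Suc j + i'" by simp
    then have "i = d - 1" using i i' j by auto
    then show "x = m * int (d - 1)" using i by simp
  next
    show "m * int (d - 1) \<in> J_set m d Rm" unfolding Jm using j
      by (intro image_eqI[where x="d-1"]) auto
    have "int (d - 1) = int (Suc j) + int (d - 1 - j - 1)" using j by simp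
    then have "m * int (d - 1) = b + m * int (d - 1 - j - 1)" unfolding b_def by (metis distrib_left)
    then show "m * int (d - 1) \<in> J_set m d Rp" unfolding Jp using j
      by (intro image_eqI[where x="d-1-j-1"]) auto
  qed
  have fin: "finite (J_set m d Rm)" "finite (J_set m d Rp)" unfolding Jm Jp by auto
  have "card (J_set m d Rm) + card (J_set m d Rp) = card (J_set m d Rm \<union> J_set m d Rp) + 1"
    using card_Un_Int[OF fin] int by simp
  then have card: "card (J_set m d Rm \<union> J_set m d Rp) = d + 1" using cm cp j by simp
  have jj: "j < d - 1" "d - 1 \<le> d - 1" using j by auto
  have memRp: "m * int (d - 1) \<in> Rp" unfolding Rp using jj by blast
  have "m * int (d - 1) \<le> Max (Rm \<union> Rp)"
    using memRp by (intro Max_ge) (auto simp: Rm' Rp')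
  moreover have "\<forall>x\<in>J_set m d Rm \<union> J_set m d Rp. 0 \<le> x \<and> x \<le> m * int (d - 1) + m * int (d - 1)"
  proof
    fix x assume "x \<in> J_set m d Rm \<union> J_set m d Rp"
    then obtain n where n: "n \<le> (d - 1) + (d - 1)" "x = m * int n"
    proof
      assume "x \<in> J_set m d Rm"
      then obtain i where "i \<le> d - 1" "x = m * int i" unfolding Jm by auto
      then show thesis using that[of i] by auto
    next
      assume "x \<in> J_set m d Rp"
      then obtain i where i: "i \<le> d - 1" "x = b + m * int i" unfolding Jp by auto
      have "x = m * int (Suc j + i)" using i b_def by (simp add: algebra_simps)
      then show thesis using that[of "Suc j + i"] i j by auto
    qed
    have "m * int n \<le> m * int ((d - 1) + (d - 1))" using n m by (intro mult_left_mono) auto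
    then show "0 \<le> x \<and> x \<le> m * int (d - 1) + m * int (d - 1)" using n m by (simp add: algebra_simps)
  qed
  ultimately show ?thesis using int card by force
qed

lemma nondisj_exc:
  assumes m: "(m::int) \<ge> 1" and s: "s \<ge> 1" and t: "t \<ge> 1" and d: "s + t = d" and b0: "0 \<le> b"
    and disj: "(\<lambda>i. 0 + m * int i) ` {..<s} \<inter> (\<lambda>i. b + m * int i) ` {..<t} = {}"
    and x1: "x \<in> (\<lambda>i. 0 + m * int i) ` {s-1..d-1}" and x2: "x \<in> (\<lambda>i. b + m * int i) ` {t-1..d-1}"
  shows "s - 1 < d - 1 \<and> (\<lambda>i. 0 + m * int i) ` {..<s} = {m * int i | i. i \<le> s - 1}
     \<and> (\<lambda>i. b + m * int i) ` {..<t} = {m * int i | i. s - 1 < i \<and> i \<le> d - 1}"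
proof -
  from x1 obtain p where p: "s - 1 \<le> p" "p \<le> d - 1" "x = m * int p" by auto
  from x2 obtain q where q: "t - 1 \<le> q" "q \<le> d - 1" "x = b + m * int q" by auto
  have bpq: "b = m * (int p - int q)" using p q by (simp add: algebra_simps)
  have "q \<le> p"
  proof (rule ccontr)
    assume "\<not> q \<le> p"
    then have "int p - int q < 0" by simp
    then have "m * (int p - int q) < 0" using m by (simp add: mult_pos_neg)
    then show False using bpq b0 by simp
  qed
  define c where "c = p - q"
  have bc: "b = m * int c" using bpq \<open>q \<le> p\<close> c_def by simp
  have "\<not> c < s"
  proof
    assume "c < s"
    then have "b \<in> (\<lambda>i. 0 + m * int i) ` {..<s}" using bc by auto
    moreover have "b \<in> (\<lambda>i. b + m * int i) ` {..<t}" using t by (auto intro!: image_eqI[where x=0])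
    ultimately show False using disj by blast
  qed
  moreover have "c \<le> s" using p q d t s c_def by auto
  ultimately have cs: "c = s" by simp
  have A: "(\<lambda>i. 0 + m * int i) ` {..<s} = {m * int i | i. i \<le> s - 1}"
    using s by force
  have B: "(\<lambda>i. b + m * int i) ` {..<t} = {m * int i | i. s - 1 < i \<and> i \<le> d - 1}"
  proof safe
    fix i assume "i < t"
    then show "\<exists>ia. b + m * int i = m * int ia \<and> s - 1 < ia \<and> ia \<le> d - 1"
      using bc cs d s by (intro exI[of _ "s + i"]) (auto simp: algebra_simps)
  next
    fix i assume i: "s - 1 < i" "i \<le> d - 1"
    have "int i = int s + int (i - s)" using i by simp
    then have "m * int i = b + m * int (i - s)" using bc cs by (metis distrib_left)
    moreover have "i - s < t" using i d s t by auto
    ultimately show "m * int i \<in> (\<lambda>i. b + m * int i) ` {..<t}" by blast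
  qed
  show ?thesis using A B s t d by auto
qed


theorem mainTheorem12:
  fixes m :: int and d :: nat and Rm Rp :: "int set"
  assumes "m \<ge> 1"
    and "arith_prog m Rm" and "arith_prog m Rp"
    and "Rm \<inter> Rp = {}"
    and "card Rm + card Rp = d"
    and "Min (Rm \<union> Rp) = 0"
    and "CARD('n) = d + 1"
  shows
    "J_set m d Rm = (\<Inter>r\<in>Rm. {r + m * int i | i. i < d})
     \<and> J_set m d Rp = (\<Inter>r\<in>Rp. {r + m * int i | i. i < d})
     \<and> card (J_set m d Rm) + card (J_set m d Rp) = d + 2
     \<and> (\<forall>(n::nat) (V :: int \<Rightarrow> real^'n).
          twisted_ngon n V \<and> gen_pos d (Max (Rm \<union> Rp) + m * int (d - 1)) V \<longrightarrow>
          (\<forall>k. (\<Inter>r\<in>Rm. diag_plane V (long_I m d) (k + r)) = span (V ` ((\<lambda>j. k + j) ` J_set m d Rm))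
             \<and> (\<Inter>r\<in>Rp. diag_plane V (long_I m d) (k + r)) = span (V ` ((\<lambda>j. k + j) ` J_set m d Rp))
             \<and> TIR_point V (long_I m d) (long_R Rm Rp) k =
                 span (V ` ((\<lambda>j. k + j) ` J_set m d Rm)) \<inter> span (V ` ((\<lambda>j. k + j) ` J_set m d Rp))))
     \<and> ((J_set m d Rm \<inter> J_set m d Rp = {}) \<longleftrightarrow>
          \<not> (\<exists>j::nat. j < d - 1 \<and>
               ((Rm = {m * int i | i. i \<le> j} \<and> Rp = {m * int i | i. j < i \<and> i \<le> d - 1}) \<or>
                (Rp = {m * int i | i. i \<le> j} \<and> Rm = {m * int i | i. j < i \<and> i \<le> d - 1}))))
     \<and> ((\<exists>j::nat. j < d - 1 \<and>
               ((Rm = {m * int i | i. i \<le> j} \<and> Rp = {m * int i | i. j < i \<and> i \<le> d - 1}) \<or>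
                (Rp = {m * int i | i. i \<le> j} \<and> Rm = {m * int i | i. j < i \<and> i \<le> d - 1})))
        \<longrightarrow> (\<exists>c::int. \<forall>(n::nat) (V :: int \<Rightarrow> real^'n).
              twisted_ngon n V \<and> gen_pos d (Max (Rm \<union> Rp) + m * int (d - 1)) V \<longrightarrow>
              (\<forall>k. TIR_point V (long_I m d) (long_R Rm Rp) k = span {V (k + c)})))"
proof -
  note m = assms(1)
  obtain a s where s1: "s \<ge> 1" and Rm: "Rm = (\<lambda>i. a + m * int i) ` {..<s}"
    using assms(2) unfolding arith_prog_def prog_eq by blast
  obtain b t where t1: "t \<ge> 1" and Rp: "Rp = (\<lambda>i. b + m * int i) ` {..<t}"
    using assms(3) unfolding arith_prog_def prog_eq by blast
  have cs: "card Rm = s" using Rm card_prog[OF m] by simp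
  have ct: "card Rp = t" using Rp card_prog[OF m] by simp
  have d: "s + t = d" using assms(5) cs ct by simp
  have "0 \<in> {..<s}" "0 \<in> {..<t}" using s1 t1 by auto
  then have finm: "finite Rm" "Rm \<noteq> {}" and finp: "finite Rp" "Rp \<noteq> {}" using Rm Rp by blast+
  have minm: "Min Rm = a" using Rm Min_prog[OF m s1] by simp
  have minp: "Min Rp = b" using Rp Min_prog[OF m t1] by simp
  have maxm: "Max Rm = a + m * int (s - 1)" using Rm Max_prog[OF m s1] by simp
  have maxp: "Max Rp = b + m * int (t - 1)" using Rp Max_prog[OF m t1] by simp
  have "Min (Rm \<union> Rp) = min a b" using Min.union[OF finm finp] minm minp by simp
  then have ab: "min a b = 0" using assms(6) by simp
  have a0: "0 \<le> a" and b0: "0 \<le> b" using ab by auto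
  define L where "L = Max (Rm \<union> Rp) + m * int (d - 1)"
  have mxm: "Max Rm \<le> Max (Rm \<union> Rp)" by (rule Max_mono) (use finm finp in auto)
  have mxp: "Max Rp \<le> Max (Rm \<union> Rp)" by (rule Max_mono) (use finm finp in auto)
  have sd: "s \<le> d" "t \<le> d" using d t1 s1 by auto
  have Jm: "J_set m d Rm = (\<lambda>i. a + m * int i) ` {s-1..d-1}" unfolding Rm by (rule J_prog[OF m s1 sd(1)])
  have Jp: "J_set m d Rp = (\<lambda>i. b + m * int i) ` {t-1..d-1}" unfolding Rp by (rule J_prog[OF m t1 sd(2)])
  have P1: "J_set m d Rm = (\<Inter>r\<in>Rm. {r + m * int i | i. i < d})"
    unfolding Jm unfolding Rm by (rule Int_prog[OF m s1 sd(1), symmetric])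
  have P2: "J_set m d Rp = (\<Inter>r\<in>Rp. {r + m * int i | i. i < d})"
    unfolding Jp unfolding Rp by (rule Int_prog[OF m t1 sd(2), symmetric])
  have P3: "card (J_set m d Rm) + card (J_set m d Rp) = d + 2"
    unfolding Jm Jp card_J_prog[OF m s1 sd(1)] card_J_prog[OF m t1 sd(2)] using d s1 t1 by simp
  have geo: "(\<Inter>r\<in>Rm. diag_plane V (long_I m d) (k + r)) = span (V ` ((\<lambda>j. k + j) ` J_set m d Rm))
             \<and> (\<Inter>r\<in>Rp. diag_plane V (long_I m d) (k + r)) = span (V ` ((\<lambda>j. k + j) ` J_set m d Rp))
             \<and> TIR_point V (long_I m d) (long_R Rm Rp) k =
                 span (V ` ((\<lambda>j. k + j) ` J_set m d Rm)) \<inter> span (V ` ((\<lambda>j. k + j) ` J_set m d Rp))"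
    if g: "gen_pos d L V" for V :: "int \<Rightarrow> real^'n" and k
  proof -
    have G1: "(\<Inter>r\<in>Rm. diag_plane V (long_I m d) (k + r)) = span (V ` ((\<lambda>j. k + j) ` J_set m d Rm))"
      unfolding Jm unfolding Rm
      by (rule geo_R[OF m s1 sd(1) g a0]) (use maxm mxm in \<open>simp add: L_def\<close>)
    have G2: "(\<Inter>r\<in>Rp. diag_plane V (long_I m d) (k + r)) = span (V ` ((\<lambda>j. k + j) ` J_set m d Rp))"
      unfolding Jp unfolding Rp
      by (rule geo_R[OF m t1 sd(2) g b0]) (use maxp mxp in \<open>simp add: L_def\<close>)
    have fu: "finite (Rm \<union> Rp)" "Rm \<union> Rp \<noteq> {}" using finm finp by auto
    obtain rest where xs: "sorted_list_of_set (Rm \<union> Rp) = 0 # rest"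
      using sorted_list_of_set_nonempty[OF fu] assms(6) by metis
    have "set (psums (long_R Rm Rp)) = set (sorted_list_of_set (Rm \<union> Rp))"
      unfolding long_R_def xs psums_diffs by simp
    then have sR: "set (psums (long_R Rm Rp)) = Rm \<union> Rp" using fu by simp
    have "TIR_point V (long_I m d) (long_R Rm Rp) k =
          (\<Inter>r\<in>Rm. diag_plane V (long_I m d) (k + r)) \<inter> (\<Inter>r\<in>Rp. diag_plane V (long_I m d) (k + r))"
      unfolding TIR_point_def sR by (rule INT_Un)
    then show ?thesis using G1 G2 by simp
  qed
  have P4: "\<forall>(n::nat) (V :: int \<Rightarrow> real^'n).
          twisted_ngon n V \<and> gen_pos d (Max (Rm \<union> Rp) + m * int (d - 1)) V \<longrightarrow>
          (\<forall>k. (\<Inter>r\<in>Rm. diag_plane V (long_I m d) (k + r)) = span (V ` ((\<lambda>j. k + j) ` J_set m d Rm))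
             \<and> (\<Inter>r\<in>Rp. diag_plane V (long_I m d) (k + r)) = span (V ` ((\<lambda>j. k + j) ` J_set m d Rp))
             \<and> TIR_point V (long_I m d) (long_R Rm Rp) k =
                 span (V ` ((\<lambda>j. k + j) ` J_set m d Rm)) \<inter> span (V ` ((\<lambda>j. k + j) ` J_set m d Rp)))"
    using geo unfolding L_def by blast
  let ?exc = "\<exists>j::nat. j < d - 1 \<and>
               ((Rm = {m * int i | i. i \<le> j} \<and> Rp = {m * int i | i. j < i \<and> i \<le> d - 1}) \<or>
                (Rp = {m * int i | i. i \<le> j} \<and> Rm = {m * int i | i. j < i \<and> i \<le> d - 1}))"
  have excP: "J_set m d Rm \<inter> J_set m d Rp = {m * int (d - 1)}
       \<and> card (J_set m d Rm \<union> J_set m d Rp) = d + 1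
       \<and> (\<forall>x\<in>J_set m d Rm \<union> J_set m d Rp. 0 \<le> x \<and> x \<le> L)" if ?exc
  proof -
    from that obtain j where j: "j < d - 1" and
      c: "(Rm = {m * int i | i. i \<le> j} \<and> Rp = {m * int i | i. j < i \<and> i \<le> d - 1}) \<or>
          (Rp = {m * int i | i. i \<le> j} \<and> Rm = {m * int i | i. j < i \<and> i \<le> d - 1})" by blast
    from c show ?thesis
    proof
      assume h: "Rm = {m * int i | i. i \<le> j} \<and> Rp = {m * int i | i. j < i \<and> i \<le> d - 1}"
      show ?thesis using exc_props[OF m j conjunct1[OF h] conjunct2[OF h]] unfolding L_def .
    next
      assume h: "Rp = {m * int i | i. i \<le> j} \<and> Rm = {m * int i | i. j < i \<and> i \<le> d - 1}"
      have X: "J_set m d Rp \<inter> J_set m d Rm = {m * int (d - 1)}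
       \<and> card (J_set m d Rp \<union> J_set m d Rm) = d + 1
       \<and> (\<forall>x\<in>J_set m d Rp \<union> J_set m d Rm. 0 \<le> x \<and> x \<le> Max (Rp \<union> Rm) + m * int (d - 1))"
        by (rule exc_props[OF m j conjunct1[OF h] conjunct2[OF h]])
      have U1: "J_set m d Rp \<inter> J_set m d Rm = J_set m d Rm \<inter> J_set m d Rp" by (rule Int_commute)
      have U2: "J_set m d Rp \<union> J_set m d Rm = J_set m d Rm \<union> J_set m d Rp" by (rule Un_commute)
      have U3: "Rp \<union> Rm = Rm \<union> Rp" by (rule Un_commute)
      show ?thesis using X unfolding U1 U2 U3 L_def .
    qed
  qed
  have P5: "(J_set m d Rm \<inter> J_set m d Rp = {}) \<longleftrightarrow> \<not> ?exc"
  proof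
    assume dj: "J_set m d Rm \<inter> J_set m d Rp = {}"
    show "\<not> ?exc"
    proof
      assume ?exc
      then have "J_set m d Rm \<inter> J_set m d Rp = {m * int (d - 1)}" using excP by blast
      then show False using dj by simp
    qed
  next
    assume ne: "\<not> ?exc"
    show "J_set m d Rm \<inter> J_set m d Rp = {}"
    proof (rule ccontr)
      assume "J_set m d Rm \<inter> J_set m d Rp \<noteq> {}"
      then obtain x where x1: "x \<in> J_set m d Rm" and x2: "x \<in> J_set m d Rp" by blast
      have disj: "Rm \<inter> Rp = {}" by (rule assms(4))
      show False
      proof (cases "a = 0")
        case True
        have "s - 1 < d - 1 \<and> (\<lambda>i. 0 + m * int i) ` {..<s} = {m * int i | i. i \<le> s - 1}
              \<and> (\<lambda>i. b + m * int i) ` {..<t} = {m * int i | i. s - 1 < i \<and> i \<le> d - 1}"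
          by (rule nondisj_exc[OF m s1 t1 d b0]) (use disj x1 x2 True Rm Rp Jm Jp in auto)
        then have "s - 1 < d - 1 \<and> Rm = {m * int i | i. i \<le> s - 1}
              \<and> Rp = {m * int i | i. s - 1 < i \<and> i \<le> d - 1}" using Rm Rp True by simp
        then show False using ne by blast
      next
        case False
        then have b00: "b = 0" using ab by auto
        have "t - 1 < d - 1 \<and> (\<lambda>i. 0 + m * int i) ` {..<t} = {m * int i | i. i \<le> t - 1}
              \<and> (\<lambda>i. a + m * int i) ` {..<s} = {m * int i | i. t - 1 < i \<and> i \<le> d - 1}"
          by (rule nondisj_exc[OF m t1 s1 _ a0]) (use d disj x1 x2 b00 Rm Rp Jm Jp in auto)
        then have "t - 1 < d - 1 \<and> Rp = {m * int i | i. i \<le> t - 1}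
              \<and> Rm = {m * int i | i. t - 1 < i \<and> i \<le> d - 1}" using Rm Rp b00 by simp
        then show False using ne by blast
      qed
    qed
  qed
  have P6: "?exc \<longrightarrow> (\<exists>c::int. \<forall>(n::nat) (V :: int \<Rightarrow> real^'n).
              twisted_ngon n V \<and> gen_pos d (Max (Rm \<union> Rp) + m * int (d - 1)) V \<longrightarrow>
              (\<forall>k. TIR_point V (long_I m d) (long_R Rm Rp) k = span {V (k + c)}))"
  proof
    assume e: ?exc
    note E = excP[OF e]
    show "\<exists>c::int. \<forall>(n::nat) (V :: int \<Rightarrow> real^'n).
              twisted_ngon n V \<and> gen_pos d (Max (Rm \<union> Rp) + m * int (d - 1)) V \<longrightarrow>
              (\<forall>k. TIR_point V (long_I m d) (long_R Rm Rp) k = span {V (k + c)})"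
    proof (intro exI[of _ "m * int (d - 1)"] allI impI)
      fix n :: nat and V :: "int \<Rightarrow> real^'n" and k
      assume "twisted_ngon n V \<and> gen_pos d (Max (Rm \<union> Rp) + m * int (d - 1)) V"
      then have g: "gen_pos d L V" unfolding L_def by blast
      let ?A = "(\<lambda>j. k + j) ` J_set m d Rm" and ?B = "(\<lambda>j. k + j) ` J_set m d Rp"
      have injk: "inj (\<lambda>j::int. k + j)" by (auto simp: inj_def)
      have "?A \<union> ?B = (\<lambda>j. k + j) ` (J_set m d Rm \<union> J_set m d Rp)" by auto
      then have cAB: "card (?A \<union> ?B) = d + 1"
        using E card_image[of "\<lambda>j. k + j"] injk by (simp add: inj_on_def)
      have sAB: "?A \<union> ?B \<subseteq> {k..k+L}" using E by auto
      have iAB: "?A \<inter> ?B = {k + m * int (d - 1)}"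
        using E image_Int[OF injk, of "J_set m d Rm" "J_set m d Rp"] by simp
      have "TIR_point V (long_I m d) (long_R Rm Rp) k = span (V ` ?A) \<inter> span (V ` ?B)"
        using geo[OF g] by blast
      also have "\<dots> = span (V ` (?A \<inter> ?B))" by (rule gen_span_Int[OF g sAB]) (use cAB in simp)
      finally show "TIR_point V (long_I m d) (long_R Rm Rp) k = span {V (k + m * int (d - 1))}"
        using iAB by simp
    qed
  qed
  show ?thesis using P1 P2 P3 P4 P5 P6 by blast
qed

end
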